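(* Let $x^{(0)}=(x^{(0)}_1,\dots,x^{(0)}_n)\in\mathbb R^n$, let $h_0:=H(x^{(0)})$ and $v_i^{(0)}:=a_1x^{(0)}_1+\dots+a_ix^{(0)}_i$ ($v_0^{(0)}:=0$). Define $f(t):=\dfrac{e^{h_0t}-1}{(e^{h_0t}+1)h_0}=\dfrac1{h_0}\tanh\!\big(\tfrac{h_0t}{2}\big)$ if $h_0\neq0$, and $f(t):=t/2$ if $h_0=0$. Then the solution $x(t)$ of $\dot x_i=x_i\big(\sum_{j>i}a_jx_j-\sum_{j<i}a_jx_j\big)$ ($i=1,\dots,n$) with $x(0)=x^{(0)}$ is given, for $t$ in the interval around $0$ where the denominators do not vanish, by $$x_i(t)=x_i^{(0)}\frac{(1-f(t)h_0)(1+f(t)h_0)}{\big(1-f(t)h_0+2f(t)v^{(0)}_{i-1}\big)\big(1-f(t)h_0+2f(t)v^{(0)}_i\big)},\qquad i=1,\dots,n.$$ Equivalently, when $h_0\ne0$, $x_i(t)=\dfrac{x_i^{(0)}e^{th_0}h_0^2}{\big(h_0+(e^{th_0}-1)v^{(0)}_{i-1}\big)\big(h_0+(e^{th_0}-1)v^{(0)}_i\big)}$.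
   Context: Here $(a_1,\dots,a_n)\in\mathbb R^n\setminus\{0\}$ and $H=a_1x_1+\dots+a_nx_n$. *)

theory Defs
  imports "HOL-Analysis.Analysis"
begin

text \<open>Vectors in R^n are represented as functions nat => real, using indices 1..n.\<close>

definition Hval :: "(nat \<Rightarrow> real) \<Rightarrow> nat \<Rightarrow> (nat \<Rightarrow> real) \<Rightarrow> real" where
  "Hval a n x = (\<Sum>j=1..n. a j * x j)"

definition vpart :: "(nat \<Rightarrow> real) \<Rightarrow> (nat \<Rightarrow> real) \<Rightarrow> nat \<Rightarrow> real" where
  "vpart a x i = (\<Sum>j=1..i. a j * x j)"

definition fcoef :: "real \<Rightarrow> real \<Rightarrow> real" where
  "fcoef h t = (if h \<noteq> 0 then (exp (h * t) - 1) / ((exp (h * t) + 1) * h) else t / 2)"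

definition rhs :: "(nat \<Rightarrow> real) \<Rightarrow> nat \<Rightarrow> (nat \<Rightarrow> real) \<Rightarrow> nat \<Rightarrow> real" where
  "rhs a n x i = x i * ((\<Sum>j\<in>{i<..n}. a j * x j) - (\<Sum>j\<in>{1..<i}. a j * x j))"

definition solformula :: "(nat \<Rightarrow> real) \<Rightarrow> nat \<Rightarrow> (nat \<Rightarrow> real) \<Rightarrow> real \<Rightarrow> nat \<Rightarrow> real" where
  "solformula a n x0 t i =
     (let h0 = Hval a n x0; f = fcoef h0 t in
      x0 i * ((1 - f * h0) * (1 + f * h0)) /
        ((1 - f * h0 + 2 * f * vpart a x0 (i - 1)) * (1 - f * h0 + 2 * f * vpart a x0 i)))"

end

theory Submission
  imports Defs
begin

lemma alg1: "(h::real) \<noteq> 0 \<Longrightarrow> E > 0 \<Longrightarrow> (E - 1) / ((E + 1) * h) * h = (E - 1) / (E + 1)"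
proof -
  assume "h \<noteq> 0" "E > 0"
  then have "E + 1 \<noteq> 0" by linarith
  then show ?thesis using \<open>h \<noteq> 0\<close> by simp
qed

lemma alg3: "E > (0::real) \<Longrightarrow> \<bar>(E - 1) / (E + 1)\<bar> < 1"
proof -
  assume E: "E > 0"
  then have p: "E + 1 > 0" by linarith
  have l0: "- (E + 1) < E - 1" using E by linarith
  have l: "- 1 * (E + 1) < E - 1" using l0 by (simp only: mult_minus1)
  have r0: "E - 1 < E + 1" by simp
  have r: "E - 1 < 1 * (E + 1)" using r0 by (simp only: mult_1)
  have a: "(E - 1) / (E + 1) < 1" using r by (simp only: pos_divide_less_eq[OF p])
  have b: "- 1 < (E - 1) / (E + 1)" using l by (simp only: pos_less_divide_eq[OF p])
  have b': "- ((E - 1) / (E + 1)) < 1" using b by (simp only: minus_less_iff)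
  show ?thesis unfolding abs_less_iff using a b' by (rule conjI)
qed

lemma alg2u: "(u::real) \<noteq> 0 \<Longrightarrow> (1 - ((u - 2) / u)\<^sup>2) / 2 = 2 * (u - 1) / u\<^sup>2"
proof -
  assume u: "u \<noteq> 0"
  have q: "((u - 2) / u)\<^sup>2 = (u - 2)\<^sup>2 / u\<^sup>2" by (rule power_divide)
  have r: "(u\<^sup>2 - (u - 2)\<^sup>2) / u\<^sup>2 = 1 - (u - 2)\<^sup>2 / u\<^sup>2"
    using u by (subst diff_divide_distrib) simp
  have "(1 - ((u - 2) / u)\<^sup>2) / 2 = ((u\<^sup>2 - (u - 2)\<^sup>2) / u\<^sup>2) / 2"
    unfolding q r ..
  also have "\<dots> = (u\<^sup>2 - (u - 2)\<^sup>2) / (2 * u\<^sup>2)" by simp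
  also have "u\<^sup>2 - (u - 2)\<^sup>2 = 2 * (2 * (u - 1))" by (simp add: power2_eq_square algebra_simps)
  also have "2 * (2 * (u - 1)) / (2 * u\<^sup>2) = 2 * (u - 1) / u\<^sup>2"
    by (rule mult_divide_mult_cancel_left) simp
  finally show ?thesis .
qed

lemma alg2: "(h::real) \<noteq> 0 \<Longrightarrow> E > 0 \<Longrightarrow>
   (E * h * ((E + 1) * h) - (E - 1) * (E * h * h)) / ((E + 1) * h * ((E + 1) * h))
   = (1 - ((E - 1) / ((E + 1))) ^2) / 2"
proof -
  assume h: "h \<noteq> 0" and E: "E > 0"
  have num: "E * h * ((E + 1) * h) - (E - 1) * (E * h * h) = (2 * E) * (h * h)" by (simp add: algebra_simps)
  have den: "(E + 1) * h * ((E + 1) * h) = (E + 1)\<^sup>2 * (h * h)" by (simp add: power2_eq_square algebra_simps)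
  have hh: "h * h \<noteq> 0" using h by simp
  have "(E * h * ((E + 1) * h) - (E - 1) * (E * h * h)) / ((E + 1) * h * ((E + 1) * h)) = 2 * E / (E + 1)\<^sup>2"
    unfolding num den using hh by simp
  also have "\<dots> = (1 - ((E - 1) / (E + 1))\<^sup>2) / 2"
  proof -
    have e: "E + 1 - 2 = E - 1" "E + 1 - 1 = E" by simp_all
    have u: "E + 1 \<noteq> 0" using E by linarith
    have "(1 - ((E + 1 - 2) / (E + 1))\<^sup>2) / 2 = 2 * (E + 1 - 1) / (E + 1)\<^sup>2" by (rule alg2u[OF u])
    then show ?thesis unfolding e by (rule sym)
  qed
  finally show ?thesis .
qed

lemma fcoef_0: "fcoef h 0 = 0" by (simp add: fcoef_def)

lemma fcoef_bound: "\<bar>fcoef h t * h\<bar> < 1"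
proof (cases "h = 0")
  case True then show ?thesis by (simp add: fcoef_def)
next
  case False
  have e: "exp (h*t) > 0" by simp
  show ?thesis using alg1[OF False e] alg3[OF e] False by (simp add: fcoef_def)
qed

lemma fcoef_deriv: "(fcoef h has_real_derivative (1 - (fcoef h t * h)^2)/2) (at t)"
proof (cases "h = 0")
  case True
  have "fcoef h = (\<lambda>t. t / 2)" using True by (auto simp: fcoef_def)
  then show ?thesis using True by (auto intro!: derivative_eq_intros)
next
  case False
  have e: "exp (h*t) > 0" by simp
  have eq: "fcoef h = (\<lambda>t. (exp (h * t) - 1) / ((exp (h * t) + 1) * h))" using False by (auto simp: fcoef_def fun_eq_iff)
  have ne2: "exp (h*t) + 1 \<noteq> 0" using e by linarith
  have ne: "(exp (h*t) + 1) * h \<noteq> 0" using ne2 False by simp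
  show ?thesis unfolding eq
    apply (rule derivative_eq_intros refl ne)+
    using alg2[OF False e] alg1[OF False e] False ne2 by (simp_all add: fcoef_def)
qed

lemma comp_alg2:
  fixes f h v1 v2 c P Q N :: real
  assumes P: "P = 1 - f * h + 2 * f * v1" and Q: "Q = 1 - f * h + 2 * f * v2"
    and P0: "P \<noteq> 0" and Q0: "Q \<noteq> 0"
    and N: "N = c * ((1 - f * h) * (1 + f * h)) * (h * P * Q - (1 + f * h) * v2 * P - (1 + f * h) * v1 * Q)"
  shows "N / (P * Q * (P * Q)) = c * ((1 - f * h) * (1 + f * h)) / (P * Q) * (h - (1 + f * h) * v2 / Q - (1 + f * h) * v1 / P)"
  unfolding N using P0 Q0 by (simp add: field_simps)

lemma num_id:
  fixes f h v1 v2 c w :: real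
  assumes "2 * w = 1 - (f * h)^2"
  shows "((0 * ((1 - f * h) * (1 + f * h)) +
       ((0 - (w * h + 0 * f)) * (1 + f * h) +
        (0 + (w * h + 0 * f)) * (1 - f * h)) *
       c) *
      ((1 - f * h + 2 * f * v1) * (1 - f * h + 2 * f * v2)) -
      c * ((1 - f * h) * (1 + f * h)) *
      ((0 - (w * h + 0 * f) +
        ((0 * f + w * 2) * v1 + 0 * (2 * f))) *
       (1 - f * h + 2 * f * v2) +
       (0 - (w * h + 0 * f) +
        ((0 * f + w * 2) * v2 + 0 * (2 * f))) *
       (1 - f * h + 2 * f * v1)))
   = c * ((1 - f * h) * (1 + f * h)) * (h * (1 - f * h + 2 * f * v1) * (1 - f * h + 2 * f * v2)
       - (1 + f * h) * v2 * (1 - f * h + 2 * f * v1) - (1 + f * h) * v1 * (1 - f * h + 2 * f * v2))"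
  using assms by algebra

lemma comp_deriv:
  fixes F :: "real \<Rightarrow> real"
  assumes F: "(F has_real_derivative (1 - (F t * h)^2)/2) (at t)"
    and D1: "1 - F t * h + 2 * F t * v1 \<noteq> 0" and D2: "1 - F t * h + 2 * F t * v2 \<noteq> 0"
  shows "((\<lambda>s. c * ((1 - F s * h) * (1 + F s * h)) / ((1 - F s * h + 2 * F s * v1) * (1 - F s * h + 2 * F s * v2))) has_real_derivative
   (c * ((1 - F t * h) * (1 + F t * h)) / ((1 - F t * h + 2 * F t * v1) * (1 - F t * h + 2 * F t * v2))) * (h - (1 + F t * h) * v2 / (1 - F t * h + 2 * F t * v2) - (1 + F t * h) * v1 / (1 - F t * h + 2 * F t * v1))) (at t)"
proof -
  have w2: "2 * ((1 - (F t * h)^2) / 2) = 1 - (F t * h)^2" by simp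
  show ?thesis
    apply (rule derivative_eq_intros refl F)+
    subgoal using D1 D2 by simp
    apply (rule comp_alg2[OF refl refl D1 D2])
    by (rule num_id[OF w2])
qed

lemma interval_sub:
  fixes J :: "real set"
  assumes "is_interval J" "a \<in> J" "b \<in> J"
  shows "{a..b} \<subseteq> J"
  using mem_is_interval_1_I[OF assms(1) assms(2) assms(3)] by auto

lemma interval_interior:
  fixes J :: "real set"
  assumes "is_interval J" "a \<in> J" "b \<in> J" "a < x" "x < b"
  shows "x \<in> interior J"
proof -
  have "{a<..<b} \<subseteq> J" using interval_sub[OF assms(1-3)] by auto
  then have "{a<..<b} \<subseteq> interior J" by (simp add: interior_maximal)
  then show ?thesis using assms(4,5) by auto
qed

lemma gronwall_zero:
  fixes \<phi> \<phi>' :: "real \<Rightarrow> real" and J :: "real set"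
  assumes J: "is_interval J" and J0: "0 \<in> J" and JT: "T \<in> J"
    and deriv: "\<And>t. t \<in> J \<Longrightarrow> (\<phi> has_real_derivative \<phi>' t) (at t within J)"
    and bound: "\<And>t. t \<in> {min 0 T..max 0 T} \<Longrightarrow> \<bar>\<phi>' t\<bar> \<le> K * \<phi> t"
    and nonneg: "\<And>t. t \<in> J \<Longrightarrow> \<phi> t \<ge> 0" and z: "\<phi> 0 = 0"
  shows "\<phi> T = 0"
proof -
  have cont: "continuous_on J \<phi>" using deriv by (rule DERIV_continuous_on)
  show ?thesis
  proof (cases "0 \<le> T")
    case True
    define w where "w t = \<phi> t * exp (- K * t)" for t
    have "w T \<le> w 0"
    proof (rule DERIV_nonpos_imp_decreasing_open[OF True])
      fix x assume x: "0 < x" "x < T"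
      have xi: "x \<in> interior J" using interval_interior[OF J J0 JT x] .
      have xJ: "x \<in> J" using xi interior_subset by blast
      have d: "(\<phi> has_real_derivative \<phi>' x) (at x)"
        using deriv[OF xJ] at_within_interior[OF xi] by simp
      have "(w has_real_derivative (\<phi>' x * exp (- K * x) + \<phi> x * (exp (- K * x) * (- K)))) (at x)"
      proof -
        have e: "((\<lambda>t. exp (- K * t)) has_real_derivative (exp (- K * x) * (- K))) (at x)"
          by (auto intro!: derivative_eq_intros)
        show ?thesis unfolding w_def using DERIV_mult[OF d e] by (simp add: ac_simps)
      qed
      moreover have "\<phi>' x * exp (- K * x) + \<phi> x * (exp (- K * x) * (- K)) \<le> 0"
      proof -
        have xm: "x \<in> {min 0 T..max 0 T}" using x True by (simp add: min_def max_def)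
        have "\<phi>' x \<le> K * \<phi> x" using bound[OF xm] by (simp add: abs_le_iff)
        then have "(\<phi>' x - K * \<phi> x) * exp (- K * x) \<le> 0"
          by (simp add: mult_nonpos_nonneg)
        then show ?thesis by (simp add: algebra_simps)
      qed
      ultimately show "\<exists>y. (w has_real_derivative y) (at x) \<and> y \<le> 0" by blast
    next
      have sub: "{0..T} \<subseteq> J" using interval_sub[OF J J0 JT] .
      have cw: "continuous_on {0..T} \<phi>" using continuous_on_subset[OF cont sub] .
      show "continuous_on {0..T} w" unfolding w_def
        by (intro continuous_on_mult cw continuous_intros)
    qed
    then have "\<phi> T * exp (- K * T) \<le> 0" using z by (simp add: w_def)
    then have "\<phi> T \<le> 0" by (simp add: mult_le_0_iff)
    then show ?thesis using nonneg[OF JT] by simp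
  next
    case False
    then have TL: "T \<le> 0" by simp
    define w where "w t = \<phi> t * exp (K * t)" for t
    have "w T \<le> w 0"
    proof (rule DERIV_nonneg_imp_increasing_open[OF TL])
      fix x assume x: "T < x" "x < 0"
      have xi: "x \<in> interior J" using interval_interior[OF J JT J0 x] .
      have xJ: "x \<in> J" using xi interior_subset by blast
      have d: "(\<phi> has_real_derivative \<phi>' x) (at x)"
        using deriv[OF xJ] at_within_interior[OF xi] by simp
      have "(w has_real_derivative (\<phi>' x * exp (K * x) + \<phi> x * (exp (K * x) * K))) (at x)"
      proof -
        have e: "((\<lambda>t. exp (K * t)) has_real_derivative (exp (K * x) * K)) (at x)"
          by (auto intro!: derivative_eq_intros)
        show ?thesis unfolding w_def using DERIV_mult[OF d e] by (simp add: ac_simps)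
      qed
      moreover have "\<phi>' x * exp (K * x) + \<phi> x * (exp (K * x) * K) \<ge> 0"
      proof -
        have xm: "x \<in> {min 0 T..max 0 T}" using x TL by (simp add: min_def max_def)
        have "- \<phi>' x \<le> K * \<phi> x" using bound[OF xm] by (simp add: abs_le_iff)
        then have "(\<phi>' x + K * \<phi> x) * exp (K * x) \<ge> 0"
          by simp
        then show ?thesis by (simp add: algebra_simps)
      qed
      ultimately show "\<exists>y. (w has_real_derivative y) (at x) \<and> y \<ge> 0" by blast
    next
      have sub: "{T..0} \<subseteq> J" using interval_sub[OF J JT J0] .
      have cw: "continuous_on {T..0} \<phi>" using continuous_on_subset[OF cont sub] .
      show "continuous_on {T..0} w" unfolding w_def
        by (intro continuous_on_mult cw continuous_intros)
    qed
    then have "\<phi> T * exp (K * T) \<le> 0" using z by (simp add: w_def)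
    then have "\<phi> T \<le> 0" by (simp add: mult_le_0_iff)
    then show ?thesis using nonneg[OF JT] by simp
  qed
qed

definition Sf :: "(nat \<Rightarrow> real) \<Rightarrow> nat \<Rightarrow> (nat \<Rightarrow> real) \<Rightarrow> nat \<Rightarrow> real" where
  "Sf a n z i = (\<Sum>j\<in>{i<..n}. a j * z j) - (\<Sum>j\<in>{1..<i}. a j * z j)"

lemma rhs_Sf: "rhs a n z i = z i * Sf a n z i"
  by (simp add: rhs_def Sf_def)

lemma Sf_diff: "Sf a n X i - Sf a n Y i = Sf a n (\<lambda>j. X j - Y j) i"
  by (simp add: Sf_def sum_subtractf algebra_simps)

lemma rhs_diff: "rhs a n X i - rhs a n Y i = (X i - Y i) * Sf a n X i + Y i * Sf a n (\<lambda>j. X j - Y j) i"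
  by (simp add: rhs_Sf Sf_diff[symmetric] algebra_simps)

lemma Sf_bound:
  assumes "i \<in> {1..n}"
  shows "\<bar>Sf a n z i\<bar> \<le> (\<Sum>j=1..n. \<bar>a j\<bar> * \<bar>z j\<bar>)"
proof -
  have "\<bar>Sf a n z i\<bar> \<le> \<bar>\<Sum>j\<in>{i<..n}. a j * z j\<bar> + \<bar>\<Sum>j\<in>{1..<i}. a j * z j\<bar>"
    unfolding Sf_def by (rule abs_triangle_ineq4)
  also have "\<dots> \<le> (\<Sum>j\<in>{i<..n}. \<bar>a j\<bar> * \<bar>z j\<bar>) + (\<Sum>j\<in>{1..<i}. \<bar>a j\<bar> * \<bar>z j\<bar>)"
    by (intro add_mono) (simp_all add: sum_abs abs_mult order_trans[OF sum_abs])
  also have "\<dots> = (\<Sum>j\<in>{i<..n} \<union> {1..<i}. \<bar>a j\<bar> * \<bar>z j\<bar>)"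
    by (rule sum.union_disjoint[symmetric]) auto
  also have "\<dots> \<le> (\<Sum>j=1..n. \<bar>a j\<bar> * \<bar>z j\<bar>)"
    using assms by (intro sum_mono2) auto
  finally show ?thesis .
qed

lemma lip:
  fixes X Y a :: "nat \<Rightarrow> real" and B :: real
  assumes X: "\<And>j. j \<in> {1..n} \<Longrightarrow> \<bar>X j\<bar> \<le> B" and Y: "\<And>j. j \<in> {1..n} \<Longrightarrow> \<bar>Y j\<bar> \<le> B"
  defines "A \<equiv> (\<Sum>j=1..n. \<bar>a j\<bar>)"
  shows "\<bar>\<Sum>i=1..n. 2 * (X i - Y i) * (rhs a n X i - rhs a n Y i)\<bar>
     \<le> (2 * A * B + 2 * B * real n * A) * (\<Sum>i=1..n. (X i - Y i)^2)"
proof -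
  define d where "d j = X j - Y j" for j
  define \<phi> where "\<phi> = (\<Sum>i=1..n. (d i)^2)"
  have B0: "B \<ge> 0" if "n \<ge> 1" using X[of 1] that by auto
  have A0: "A \<ge> 0" unfolding A_def by (simp add: sum_nonneg)
  have phi0: "\<phi> \<ge> 0" unfolding \<phi>_def by (simp add: sum_nonneg)
  have dsq: "(d i)^2 \<le> \<phi>" if "i \<in> {1..n}" for i
    unfolding \<phi>_def by (rule member_le_sum) (use that in auto)
  have dd: "\<bar>d i\<bar> * \<bar>d j\<bar> \<le> \<phi>" if "i \<in> {1..n}" "j \<in> {1..n}" for i j
  proof -
    have "2 * (\<bar>d i\<bar> * \<bar>d j\<bar>) \<le> (d i)^2 + (d j)^2"
      using sum_squares_bound[of "\<bar>d i\<bar>" "\<bar>d j\<bar>"] by (simp add: power2_eq_square algebra_simps)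
    then show ?thesis using dsq[OF that(1)] dsq[OF that(2)] by linarith
  qed
  have NX: "\<bar>Sf a n X i\<bar> \<le> A * B" if "i \<in> {1..n}" for i
  proof -
    have "\<bar>Sf a n X i\<bar> \<le> (\<Sum>j=1..n. \<bar>a j\<bar> * \<bar>X j\<bar>)" by (rule Sf_bound[OF that])
    also have "\<dots> \<le> (\<Sum>j=1..n. \<bar>a j\<bar> * B)"
      by (intro sum_mono mult_left_mono X) auto
    also have "\<dots> = A * B" unfolding A_def by (simp add: sum_distrib_right)
    finally show ?thesis .
  qed
  have Nd: "\<bar>d i\<bar> * \<bar>Sf a n d i\<bar> \<le> A * \<phi>" if "i \<in> {1..n}" for i
  proof -
    have "\<bar>d i\<bar> * \<bar>Sf a n d i\<bar> \<le> \<bar>d i\<bar> * (\<Sum>j=1..n. \<bar>a j\<bar> * \<bar>d j\<bar>)"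
      by (intro mult_left_mono Sf_bound[OF that]) auto
    also have "\<dots> = (\<Sum>j=1..n. \<bar>a j\<bar> * (\<bar>d i\<bar> * \<bar>d j\<bar>))"
      by (simp add: sum_distrib_left algebra_simps)
    also have "\<dots> \<le> (\<Sum>j=1..n. \<bar>a j\<bar> * \<phi>)"
      by (intro sum_mono mult_left_mono dd that) auto
    also have "\<dots> = A * \<phi>" unfolding A_def by (simp add: sum_distrib_right)
    finally show ?thesis .
  qed
  have tm: "\<bar>2 * d i * (rhs a n X i - rhs a n Y i)\<bar> \<le> 2 * A * B * (d i)^2 + 2 * B * A * \<phi>"
    if i: "i \<in> {1..n}" for i
  proof -
    have n1: "n \<ge> 1" using i by auto
    have e: "rhs a n X i - rhs a n Y i = d i * Sf a n X i + Y i * Sf a n d i"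
      unfolding d_def by (rule rhs_diff)
    have "\<bar>2 * d i * (rhs a n X i - rhs a n Y i)\<bar> = 2 * \<bar>d i\<bar> * \<bar>d i * Sf a n X i + Y i * Sf a n d i\<bar>"
      unfolding e by (simp add: abs_mult)
    also have "\<dots> \<le> 2 * \<bar>d i\<bar> * (\<bar>d i\<bar> * \<bar>Sf a n X i\<bar> + \<bar>Y i\<bar> * \<bar>Sf a n d i\<bar>)"
      by (intro mult_left_mono) (auto simp: abs_mult intro: order_trans[OF abs_triangle_ineq])
    also have "\<dots> = 2 * (\<bar>d i\<bar> * \<bar>d i\<bar> * \<bar>Sf a n X i\<bar>) + 2 * (\<bar>Y i\<bar> * (\<bar>d i\<bar> * \<bar>Sf a n d i\<bar>))"
      by (simp add: algebra_simps)
    also have "\<dots> \<le> 2 * (\<bar>d i\<bar> * \<bar>d i\<bar> * (A * B)) + 2 * (B * (A * \<phi>))"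
      by (intro add_mono mult_left_mono mult_mono NX i Nd Y B0 n1) (auto simp: A0 phi0)
    also have "\<dots> = 2 * A * B * (d i)^2 + 2 * B * A * \<phi>"
      by (simp add: power2_eq_square algebra_simps)
    finally show ?thesis .
  qed
  have "\<bar>\<Sum>i=1..n. 2 * d i * (rhs a n X i - rhs a n Y i)\<bar>
      \<le> (\<Sum>i=1..n. \<bar>2 * d i * (rhs a n X i - rhs a n Y i)\<bar>)" by (rule sum_abs)
  also have "\<dots> \<le> (\<Sum>i=1..n. 2 * A * B * (d i)^2 + 2 * B * A * \<phi>)"
    by (intro sum_mono tm) auto
  also have "\<dots> = (2 * A * B + 2 * B * real n * A) * \<phi>"
    by (simp add: sum.distrib sum_distrib_left[symmetric] \<phi>_def algebra_simps)
  finally show ?thesis unfolding d_def \<phi>_def .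
qed

lemma V_alg:
  fixes g f vk A X P Q :: real
  assumes P: "P = 1 - g + 2 * f * vk" and Q: "Q = 1 - g + 2 * f * (vk + A * X)"
    and P0: "P \<noteq> 0" and Q0: "Q \<noteq> 0"
  shows "(1 + g) * vk / P + A * (X * ((1 - g) * (1 + g)) / (P * Q)) = (1 + g) * (vk + A * X) / Q"
proof -
  have e: "(1 + g) * vk * Q + A * (X * ((1 - g) * (1 + g))) = (1 + g) * (vk + A * X) * P"
    unfolding P Q by (simp add: algebra_simps)
  have "(1 + g) * vk / P + A * (X * ((1 - g) * (1 + g)) / (P * Q))
      = ((1 + g) * vk * Q + A * (X * ((1 - g) * (1 + g)))) / (P * Q)"
    using P0 Q0 by (simp add: add_divide_distrib)
  also have "\<dots> = (1 + g) * (vk + A * X) * P / (P * Q)" by (simp only: e)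
  also have "\<dots> = (1 + g) * (vk + A * X) / Q" using P0 by simp
  finally show ?thesis .
qed

lemma closed_fin:
  fixes u h N1 N2 c E :: real
  assumes "u \<noteq> 0" "h \<noteq> 0" "N1 \<noteq> 0" "N2 \<noteq> 0"
  shows "c * ((2 / u) * (2 * E / u)) / ((2 * N1 / (u * h)) * (2 * N2 / (u * h))) = c * E * h\<^sup>2 / (N1 * N2)"
  using assms by (simp add: field_simps power2_eq_square)

lemma closed_alg:
  fixes h E f c v1 v2 :: real
  assumes h: "h \<noteq> 0" and E: "E > 0" and f: "f = (E - 1) / ((E + 1) * h)"
    and D1: "1 - f * h + 2 * f * v1 \<noteq> 0" and D2: "1 - f * h + 2 * f * v2 \<noteq> 0"
  shows "c * ((1 - f * h) * (1 + f * h)) / ((1 - f * h + 2 * f * v1) * (1 - f * h + 2 * f * v2))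
       = c * E * h\<^sup>2 / ((h + (E - 1) * v1) * (h + (E - 1) * v2))"
proof -
  define u where "u = E + 1"
  have u0: "u \<noteq> 0" using E unfolding u_def by linarith
  have Eu: "E = u - 1" unfolding u_def by simp
  have f': "f = (u - 2) / (u * h)" unfolding f u_def by simp
  have fh: "f * h = (u - 2) / u" unfolding f' using h by simp
  have e1: "1 - f * h = 2 / u" unfolding fh using u0 by (simp add: field_simps)
  have e2: "1 + f * h = 2 * E / u" unfolding fh Eu using u0 by (simp add: field_simps)
  have e3: "1 - f * h + 2 * f * v = 2 * (h + (E - 1) * v) / (u * h)" for v
    unfolding e1 unfolding f' Eu using u0 h by (simp add: field_simps)
  have n1: "h + (E - 1) * v1 \<noteq> 0" using D1 unfolding e3 by auto
  have n2: "h + (E - 1) * v2 \<noteq> 0" using D2 unfolding e3 by auto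
  show ?thesis unfolding e3 unfolding e1 e2 by (rule closed_fin[OF u0 h n1 n2])
qed

theorem proposition2p6:
  fixes a x0 :: "nat \<Rightarrow> real" and n :: nat and I :: "real set"
  assumes a_nz: "\<exists>i\<in>{1..n}. a i \<noteq> 0"
    and I_int: "is_interval I" and I0: "0 \<in> I"
    and denom: "\<And>t i. t \<in> I \<Longrightarrow> i \<in> {1..n} \<Longrightarrow>
         (let h0 = Hval a n x0; f = fcoef h0 t in
           (1 - f * h0 + 2 * f * vpart a x0 (i - 1)) * (1 - f * h0 + 2 * f * vpart a x0 i) \<noteq> 0)"
  shows
    "(\<forall>i\<in>{1..n}. solformula a n x0 0 i = x0 i)
     \<and> (\<forall>t\<in>I. \<forall>i\<in>{1..n}. ((\<lambda>s. solformula a n x0 s i) has_real_derivative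
              rhs a n (solformula a n x0 t) i) (at t within I))
     \<and> (\<forall>x :: real \<Rightarrow> nat \<Rightarrow> real.
          (\<forall>i\<in>{1..n}. x 0 i = x0 i) \<and>
          (\<forall>t\<in>I. \<forall>i\<in>{1..n}. ((\<lambda>s. x s i) has_real_derivative rhs a n (x t) i) (at t within I))
          \<longrightarrow> (\<forall>t\<in>I. \<forall>i\<in>{1..n}. x t i = solformula a n x0 t i))
     \<and> (Hval a n x0 \<noteq> 0 \<longrightarrow>
          (\<forall>t\<in>I. \<forall>i\<in>{1..n}. solformula a n x0 t i =
             (let h0 = Hval a n x0 in
               x0 i * exp (t * h0) * h0\<^sup>2 /
               ((h0 + (exp (t * h0) - 1) * vpart a x0 (i - 1)) * (h0 + (exp (t * h0) - 1) * vpart a x0 i)))))"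
proof -
  define h where "h = Hval a n x0"
  define F where "F = fcoef h"
  define v where "v = vpart a x0"
  define D where "D t k = 1 - F t * h + 2 * F t * v k" for t k
  define y where "y = solformula a n x0"
  have y_eq: "y t i = x0 i * ((1 - F t * h) * (1 + F t * h)) / (D t (i - 1) * D t i)" for t i
    by (simp add: y_def solformula_def Let_def D_def F_def h_def v_def)
  have n1: "n \<ge> 1" using a_nz by auto
  have gb: "\<bar>F t * h\<bar> < 1" for t unfolding F_def by (rule fcoef_bound)
  have v0: "v 0 = 0" by (simp add: v_def vpart_def)
  have vn: "v n = h" by (simp add: v_def vpart_def h_def Hval_def)
  have vS: "v (Suc k) = v k + a (Suc k) * x0 (Suc k)" for k by (simp add: v_def vpart_def)
  have Dnz: "D t k \<noteq> 0" if "t \<in> I" "k \<le> n" for t k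
  proof (cases "k = 0")
    case True then show ?thesis using gb[of t] by (simp add: D_def v0 abs_less_iff)
  next
    case False
    then have "k \<in> {1..n}" using that by auto
    from denom[OF that(1) this] show ?thesis by (simp add: Let_def D_def F_def h_def v_def)
  qed
  have V: "(\<Sum>j=1..k. a j * y t j) = (1 + F t * h) * v k / D t k" if "t \<in> I" "k \<le> n" for t k
    using that(2)
  proof (induction k)
    case 0 then show ?case by (simp add: v0)
  next
    case (Suc k)
    have Dk: "D t k \<noteq> 0" using Dnz that(1) Suc by auto
    have Dk1: "D t (Suc k) \<noteq> 0" using Dnz that(1) Suc by auto
    have "(\<Sum>j=1..Suc k. a j * y t j) = (1 + F t * h) * v k / D t k + a (Suc k) * y t (Suc k)"
      using Suc by simp
    also have "\<dots> = (1 + F t * h) * v (Suc k) / D t (Suc k)"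
      unfolding y_eq diff_Suc_1 vS
      by (rule V_alg[where f="F t", OF _ _ Dk Dk1]) (simp_all add: D_def vS)
    finally show ?case .
  qed
  have Vn: "(\<Sum>j=1..n. a j * y t j) = h" if "t \<in> I" for t
  proof -
    have "D t n = 1 + F t * h" by (simp add: D_def vn algebra_simps)
    moreover have "1 + F t * h \<noteq> 0" using gb[of t] by (simp add: abs_less_iff)
    ultimately show ?thesis using V[OF that order_refl] by (simp add: vn)
  qed
  have rhs_y: "rhs a n (y t) i = y t i * (h - (1 + F t * h) * v i / D t i - (1 + F t * h) * v (i - 1) / D t (i - 1))"
    if t: "t \<in> I" and i: "i \<in> {1..n}" for t i
  proof -
    have un: "{1..n} = {1..i} \<union> {i<..n}" using i by auto
    have s1: "(\<Sum>j\<in>{i<..n}. a j * y t j) = (\<Sum>j=1..n. a j * y t j) - (\<Sum>j=1..i. a j * y t j)"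
      unfolding un by (subst sum.union_disjoint) auto
    have s2: "{1..<i} = {1..i - 1}" using i by auto
    have Vi: "(\<Sum>j=1..i. a j * y t j) = (1 + F t * h) * v i / D t i" using V[OF t] i by auto
    have Vi1: "(\<Sum>j=1..i - 1. a j * y t j) = (1 + F t * h) * v (i - 1) / D t (i - 1)" using V[OF t] i by auto
    show ?thesis unfolding rhs_def s1 s2 Vn[OF t] Vi Vi1 by (simp add: algebra_simps)
  qed
  have part2: "((\<lambda>s. y s i) has_real_derivative rhs a n (y t) i) (at t within I)"
    if t: "t \<in> I" and i: "i \<in> {1..n}" for t i
  proof -
    have D1: "D t (i - 1) \<noteq> 0" using Dnz[OF t] i by auto
    have D2: "D t i \<noteq> 0" using Dnz[OF t] i by auto
    have yf: "(\<lambda>s. y s i) = (\<lambda>s. x0 i * ((1 - F s * h) * (1 + F s * h)) / ((1 - F s * h + 2 * F s * v (i - 1)) * (1 - F s * h + 2 * F s * v i)))"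
      by (simp add: fun_eq_iff y_eq D_def)
    have cd: "((\<lambda>s. y s i) has_real_derivative
       (x0 i * ((1 - F t * h) * (1 + F t * h)) / (D t (i - 1) * D t i)) * (h - (1 + F t * h) * v i / D t i - (1 + F t * h) * v (i - 1) / D t (i - 1))) (at t)"
      unfolding yf D_def
      by (rule comp_deriv[OF fcoef_deriv[of h t, folded F_def]]) (use D1 D2 in \<open>simp_all add: D_def\<close>)
    show ?thesis unfolding rhs_y[OF t i]
      by (rule has_field_derivative_at_within[OF cd[unfolded y_eq[of t i, symmetric]]])
  qed
  have part1: "\<forall>i\<in>{1..n}. solformula a n x0 0 i = x0 i"
    using y_eq[of 0] by (simp add: y_def[symmetric] F_def fcoef_0 D_def)
  have part4: "Hval a n x0 \<noteq> 0 \<longrightarrow>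
          (\<forall>t\<in>I. \<forall>i\<in>{1..n}. solformula a n x0 t i =
             (let h0 = Hval a n x0 in
               x0 i * exp (t * h0) * h0\<^sup>2 /
               ((h0 + (exp (t * h0) - 1) * vpart a x0 (i - 1)) * (h0 + (exp (t * h0) - 1) * vpart a x0 i))))"
  proof (intro impI ballI)
    fix t i assume h0: "Hval a n x0 \<noteq> 0" and t: "t \<in> I" and i: "i \<in> {1..n}"
    have hh: "h \<noteq> 0" using h0 by (simp add: h_def)
    have D1: "D t (i - 1) \<noteq> 0" using Dnz[OF t] i by auto
    have D2: "D t i \<noteq> 0" using Dnz[OF t] i by auto
    have Ft: "F t = (exp (t * h) - 1) / ((exp (t * h) + 1) * h)"
      using hh by (simp add: F_def fcoef_def mult.commute)
    have "y t i = x0 i * exp (t * h) * h\<^sup>2 / ((h + (exp (t * h) - 1) * v (i - 1)) * (h + (exp (t * h) - 1) * v i))"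
      unfolding y_eq D_def
      by (rule closed_alg[OF hh exp_gt_zero Ft D1[unfolded D_def] D2[unfolded D_def]])
    then show "solformula a n x0 t i = (let h0 = Hval a n x0 in
               x0 i * exp (t * h0) * h0\<^sup>2 /
               ((h0 + (exp (t * h0) - 1) * vpart a x0 (i - 1)) * (h0 + (exp (t * h0) - 1) * vpart a x0 i)))"
      by (simp add: y_def h_def v_def Let_def)
  qed
  have part3: "\<forall>x :: real \<Rightarrow> nat \<Rightarrow> real.
          (\<forall>i\<in>{1..n}. x 0 i = x0 i) \<and>
          (\<forall>t\<in>I. \<forall>i\<in>{1..n}. ((\<lambda>s. x s i) has_real_derivative rhs a n (x t) i) (at t within I))
          \<longrightarrow> (\<forall>t\<in>I. \<forall>i\<in>{1..n}. x t i = solformula a n x0 t i)"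
  proof (intro allI impI ballI)
    fix x :: "real \<Rightarrow> nat \<Rightarrow> real" and T i
    assume hx: "(\<forall>i\<in>{1..n}. x 0 i = x0 i) \<and>
          (\<forall>t\<in>I. \<forall>i\<in>{1..n}. ((\<lambda>s. x s i) has_real_derivative rhs a n (x t) i) (at t within I))"
      and T: "T \<in> I" and i: "i \<in> {1..n}"
    have x0c: "x 0 j = x0 j" if "j \<in> {1..n}" for j using hx that by auto
    have xd: "((\<lambda>s. x s j) has_real_derivative rhs a n (x t) j) (at t within I)"
      if "t \<in> I" "j \<in> {1..n}" for t j using hx that by auto
    define \<phi> where "\<phi> s = (\<Sum>j=1..n. (x s j - y s j)^2)" for s
    define \<phi>' where "\<phi>' s = (\<Sum>j=1..n. 2 * (x s j - y s j) * (rhs a n (x s) j - rhs a n (y s) j))" for s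
    have deriv: "(\<phi> has_real_derivative \<phi>' t) (at t within I)" if t: "t \<in> I" for t
      unfolding \<phi>_def[abs_def] \<phi>'_def
    proof (rule DERIV_sum)
      fix j assume j: "j \<in> {1..n}"
      have d1: "((\<lambda>s. x s j - y s j) has_real_derivative (rhs a n (x t) j - rhs a n (y t) j)) (at t within I)"
        by (rule DERIV_diff[OF xd[OF t j] part2[OF t j]])
      show "((\<lambda>s. (x s j - y s j)^2) has_real_derivative 2 * (x t j - y t j) * (rhs a n (x t) j - rhs a n (y t) j)) (at t within I)"
        by (rule DERIV_cong[OF DERIV_power[OF d1, of 2]]) simp
    qed
    define S where "S = {min 0 T..max 0 T}"
    have SI: "S \<subseteq> I" unfolding S_def
      by (rule interval_sub[OF I_int]) (use I0 T in \<open>auto simp: min_def max_def\<close>)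
    have cx: "continuous_on I (\<lambda>s. x s j)" if "j \<in> {1..n}" for j
      by (rule DERIV_continuous_on[OF xd]) (use that in auto)
    have cy: "continuous_on I (\<lambda>s. y s j)" if "j \<in> {1..n}" for j
      by (rule DERIV_continuous_on[OF part2]) (use that in auto)
    define c where "c s = (\<Sum>j=1..n. \<bar>x s j\<bar> + \<bar>y s j\<bar>)" for s
    have cc: "continuous_on S c" unfolding c_def[abs_def]
      by (intro continuous_on_sum continuous_on_add continuous_on_rabs continuous_on_subset[OF cx SI]
          continuous_on_subset[OF cy SI]) auto
    have "compact (c ` S)" unfolding S_def by (rule compact_continuous_image[OF cc[unfolded S_def] compact_Icc])
    then have "bounded (c ` S)" by (rule compact_imp_bounded)
    then obtain B where B: "\<And>s. s \<in> S \<Longrightarrow> \<bar>c s\<bar> \<le> B" unfolding bounded_real by auto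
    have xB: "\<bar>x s j\<bar> \<le> B" and yB: "\<bar>y s j\<bar> \<le> B" if "s \<in> S" "j \<in> {1..n}" for s j
    proof -
      have "\<bar>x s j\<bar> + \<bar>y s j\<bar> \<le> c s" unfolding c_def
        by (rule member_le_sum[where f = "\<lambda>j. \<bar>x s j\<bar> + \<bar>y s j\<bar>"]) (use that in auto)
      moreover have "c s \<le> B" using B[OF that(1)] by simp
      ultimately show "\<bar>x s j\<bar> \<le> B" "\<bar>y s j\<bar> \<le> B" by auto
    qed
    define K where "K = 2 * (\<Sum>j=1..n. \<bar>a j\<bar>) * B + 2 * B * real n * (\<Sum>j=1..n. \<bar>a j\<bar>)"
    have bound: "\<bar>\<phi>' t\<bar> \<le> K * \<phi> t" if "t \<in> {min 0 T..max 0 T}" for t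
      unfolding \<phi>'_def \<phi>_def K_def
      by (rule lip) (use xB yB that in \<open>auto simp: S_def\<close>)
    have nonneg: "\<phi> t \<ge> 0" if "t \<in> I" for t unfolding \<phi>_def by (simp add: sum_nonneg)
    have z: "\<phi> 0 = 0" unfolding \<phi>_def using part1 x0c by (simp add: y_def)
    have "\<phi> T = 0" by (rule gronwall_zero[OF I_int I0 T deriv bound nonneg z])
    moreover have "(x T i - y T i)^2 \<le> \<phi> T" unfolding \<phi>_def
      by (rule member_le_sum[where f = "\<lambda>j. (x T j - y T j)^2"]) (use i in auto)
    ultimately have "(x T i - y T i)^2 = 0" by (simp add: order_antisym)
    then show "x T i = solformula a n x0 T i" by (simp add: y_def)
  qed
  show ?thesis
    using part1 part2 part3 part4 by (simp add: y_def)
qed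

end
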